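(* Let $(S,K,I)$ be a split graph and let $P=v_1\ldots v_n$, with $n\geq 2$, be an induced path in the factor graph $\Phi(S)$. Then $\max\{d_i: i\in[n]\}\in\{d_1,d_2,d_{n-1},d_n\}$. Moreover, if $\max\{d_i:i\in[n]\}=d_1$, then: (1) for each $i\geq 1$: $d_i\geq d_j$ and $N_i\supseteq N_j$ for all $j$ with $i+2\leq j\leq n$; (2) for each $i\geq 1$: $N_i\supseteq\bigcup_{j=i+2}^n N_j$; in particular $\bigcup_{i=1}^n N_i=N_1\cup N_2$; (3) $d_{2k}\geq d_{2k+2}$ and $d_{2k-1}\geq d_{2k+1}$ for all $k\geq 1$ (whenever the indices are at most $n$); (4) $\min\{d_i: i\in[n]\}\in\{d_{n-1},d_n\}$.
   Context: A split graph $(S,K,I)$ is a graph $S$ together with a fixed partition $V(S)=K\dot\cup I$, where $K$ is a clique and $I$ is an independent set. For a vertex $v_i$ of $S$, $N_i$ denotes its open neighborhood in $S$ and $d_i=|N_i|$ its degree in $S$; for $u,v$ write $\eta_{uv}=|N_u\cap N_v|$. The factor graph $\Phi(S)$ is the loopless multigraph with vertex set $I$ in which, for distinct $u,v\in I$, there is one edge joining $u$ and $v$ for each 2-switch of $S$ acting on $u$ and $v$ (a 2-switch replaces edges $ab,cd$ with $ac,bd$ when $ab,cd\in E(S)$ and $ac,bd\notin E(S)$); equivalently, the multiplicity of the edge $uv$ is $\sigma_{uv}=(d_u-\eta_{uv})(d_v-\eta_{uv})$, and $u,v$ are adjacent iff $\sigma_{uv}>0$. An induced path $v_1\ldots v_n$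 in $\Phi(S)$ consists of distinct vertices with consecutive ones adjacent and no other pair adjacent (multiplicities ignored for adjacency). *)

theory Defs
  imports Main
begin

definition split_graph :: "'a set \<Rightarrow> ('a \<Rightarrow> 'a \<Rightarrow> bool) \<Rightarrow> 'a set \<Rightarrow> 'a set \<Rightarrow> bool" where
  "split_graph V E K I \<longleftrightarrow>
     finite V \<and> (\<forall>u v. E u v \<longrightarrow> u \<in> V \<and> v \<in> V) \<and> (\<forall>u v. E u v \<longrightarrow> E v u) \<and>
     (\<forall>u. \<not> E u u) \<and> V = K \<union> I \<and> K \<inter> I = {} \<and>
     (\<forall>u\<in>K. \<forall>v\<in>K. u \<noteq> v \<longrightarrow> E u v) \<and> (\<forall>u\<in>I. \<forall>v\<in>I. \<not> E u v)"

definition nbhd :: "('a \<Rightarrow> 'a \<Rightarrow> bool) \<Rightarrow> 'a \<Rightarrow> 'a set" where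
  "nbhd E u = {w. E u w}"

definition deg :: "('a \<Rightarrow> 'a \<Rightarrow> bool) \<Rightarrow> 'a \<Rightarrow> nat" where
  "deg E u = card (nbhd E u)"

definition eta :: "('a \<Rightarrow> 'a \<Rightarrow> bool) \<Rightarrow> 'a \<Rightarrow> 'a \<Rightarrow> nat" where
  "eta E u v = card (nbhd E u \<inter> nbhd E v)"

text \<open>Multiplicity of the edge uv in the factor graph (number of 2-switches acting on u, v).\<close>
definition sigma :: "('a \<Rightarrow> 'a \<Rightarrow> bool) \<Rightarrow> 'a \<Rightarrow> 'a \<Rightarrow> nat" where
  "sigma E u v = (deg E u - eta E u v) * (deg E v - eta E u v)"

definition phi_adj :: "('a \<Rightarrow> 'a \<Rightarrow> bool) \<Rightarrow> 'a set \<Rightarrow> 'a \<Rightarrow> 'a \<Rightarrow> bool" where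
  "phi_adj E I u v \<longleftrightarrow> u \<in> I \<and> v \<in> I \<and> u \<noteq> v \<and> sigma E u v > 0"

definition induced_path_phi :: "('a \<Rightarrow> 'a \<Rightarrow> bool) \<Rightarrow> 'a set \<Rightarrow> (nat \<Rightarrow> 'a) \<Rightarrow> nat \<Rightarrow> bool" where
  "induced_path_phi E I v n \<longleftrightarrow>
     (\<forall>i\<in>{1..n}. v i \<in> I) \<and> inj_on v {1..n} \<and>
     (\<forall>i\<in>{1..n}. \<forall>j\<in>{1..n}. phi_adj E I (v i) (v j) \<longleftrightarrow> (j = i + 1 \<or> i = j + 1))"

end

theory Submission
  imports Defs
begin

lemma nc:
  fixes N :: "nat \<Rightarrow> 'b set"
  assumes C: "\<And>i j. i\<in>{1..n} \<Longrightarrow> j\<in>{1..n} \<Longrightarrow> (N i \<subseteq> N j \<or> N j \<subseteq> N i) \<longleftrightarrow> \<not>(j = i+1 \<or> i = j+1)"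
    and "1 \<le> k" "Suc k \<le> n"
  shows "\<not> N k \<subseteq> N (Suc k) \<and> \<not> N (Suc k) \<subseteq> N k"
proof -
  have "k \<in> {1..n}" "Suc k \<in> {1..n}" using assms(2,3) by auto
  from C[OF this] show ?thesis by simp
qed

lemma nc':
  fixes N :: "nat \<Rightarrow> 'b set"
  assumes C: "\<And>i j. i\<in>{1..n} \<Longrightarrow> j\<in>{1..n} \<Longrightarrow> (N i \<subseteq> N j \<or> N j \<subseteq> N i) \<longleftrightarrow> \<not>(j = i+1 \<or> i = j+1)"
    and "1 \<le> k" "Suc k \<le> n"
  shows "\<not> N k \<subseteq> N (Suc k)" "\<not> N (Suc k) \<subseteq> N k"
  using nc[OF C assms(2,3)] by auto

lemma cp:
  fixes N :: "nat \<Rightarrow> 'b set"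
  assumes C: "\<And>i j. i\<in>{1..n} \<Longrightarrow> j\<in>{1..n} \<Longrightarrow> (N i \<subseteq> N j \<or> N j \<subseteq> N i) \<longleftrightarrow> \<not>(j = i+1 \<or> i = j+1)"
    and "1 \<le> i" "i \<le> n" "1 \<le> j" "j \<le> n" "j \<noteq> i+1" "i \<noteq> j+1"
  shows "N i \<subseteq> N j \<or> N j \<subseteq> N i"
proof -
  have "i \<in> {1..n}" "j \<in> {1..n}" using assms(2-5) by auto
  from C[OF this] show ?thesis using assms(6,7) by simp
qed

lemma fwd:
  fixes N :: "nat \<Rightarrow> 'b set"
  assumes C: "\<And>i j. i\<in>{1..n} \<Longrightarrow> j\<in>{1..n} \<Longrightarrow> (N i \<subseteq> N j \<or> N j \<subseteq> N i) \<longleftrightarrow> \<not>(j = i+1 \<or> i = j+1)"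
    and "1 \<le> i" "i + 2 \<le> j" "N j \<subseteq> N i" "j \<le> k" "k \<le> n"
  shows "N k \<subseteq> N i"
  using assms(5,6)
proof (induction k rule: dec_induct)
  case base then show ?case using assms by simp
next
  case (step q)
  have "N i \<subseteq> N (Suc q) \<or> N (Suc q) \<subseteq> N i" using cp[where N=N and n=n and i=i and j="Suc q", OF C] step assms by simp
  moreover have "\<not> (N q \<subseteq> N (Suc q))" using nc'(1)[where N=N and n=n and k=q, OF C] step assms by simp
  ultimately show ?case using step by auto
qed

lemma bwd:
  fixes N :: "nat \<Rightarrow> 'b set"
  assumes C: "\<And>i j. i\<in>{1..n} \<Longrightarrow> j\<in>{1..n} \<Longrightarrow> (N i \<subseteq> N j \<or> N j \<subseteq> N i) \<longleftrightarrow> \<not>(j = i+1 \<or> i = j+1)"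
    and "i \<le> n" "j + 2 \<le> i" "N j \<subseteq> N i" "1 \<le> j"
  shows "t < j \<Longrightarrow> N (j - t) \<subseteq> N i"
proof (induction t)
  case 0 then show ?case using assms by simp
next
  case (Suc t)
  have "N i \<subseteq> N (j - Suc t) \<or> N (j - Suc t) \<subseteq> N i" by (rule cp[where N=N and n=n and i=i and j="j - Suc t", OF C]) (use Suc assms in arith)+
  moreover have "\<not> (N (j - t) \<subseteq> N (j - Suc t))" using nc'(2)[where N=N and n=n and k="j - Suc t", OF C] Suc assms by (simp add: Suc_diff_Suc)
  ultimately show ?case using Suc by auto
qed

lemma cmp_le:
  fixes N :: "nat \<Rightarrow> 'b set"
  assumes C: "\<And>i j. i\<in>{1..n} \<Longrightarrow> j\<in>{1..n} \<Longrightarrow> (N i \<subseteq> N j \<or> N j \<subseteq> N i) \<longleftrightarrow> \<not>(j = i+1 \<or> i = j+1)"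
    and fin: "\<And>i. finite (N i)"
    and "i\<in>{1..n}" "j\<in>{1..n}" "\<not>(j = i+1 \<or> i = j+1)" "card (N j) \<le> card (N i)"
  shows "N j \<subseteq> N i"
proof -
  have "N i \<subseteq> N j \<or> N j \<subseteq> N i" using C assms by blast
  moreover have "N i \<subseteq> N j \<Longrightarrow> N i = N j" using card_subset_eq[OF fin] assms(6) card_mono[OF fin, of "N i" j]
    by (metis le_antisym)
  ultimately show ?thesis by auto
qed

lemma nomax:
  fixes N :: "nat \<Rightarrow> 'b set"
  assumes C: "\<And>i j. i\<in>{1..n} \<Longrightarrow> j\<in>{1..n} \<Longrightarrow> (N i \<subseteq> N j \<or> N j \<subseteq> N i) \<longleftrightarrow> \<not>(j = i+1 \<or> i = j+1)"
    and fin: "\<And>i. finite (N i)"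
    and m: "3 \<le> m" "m + 2 \<le> n" and mx: "\<forall>i\<in>{1..n}. card (N i) \<le> card (N m)"
  shows False
proof -
  have a: "N (m-2) \<subseteq> N m" by (rule cmp_le[where N=N and n=n and i=m and j="m-2", OF C fin]) (use m mx[rule_format, of "m-2"] in \<open>auto simp: le_diff_conv2\<close>)
  have b: "N (m+2) \<subseteq> N m" by (rule cmp_le[where N=N and n=n and i=m and j="m+2", OF C fin]) (use m mx[rule_format, of "m+2"] in auto)
  have c1: "N (m-1) \<subseteq> N (m+2) \<or> N (m+2) \<subseteq> N (m-1)" using cp[where N=N and n=n and i="m-1" and j="m+2", OF C] m by simp
  have c2: "\<not> N (m-1) \<subseteq> N m" using nc'(1)[where N=N and n=n and k="m-1", OF C] m by simp
  have d1: "N (m+2) \<subseteq> N (m-1)" using c1 c2 b by auto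
  have c3: "N (m+1) \<subseteq> N (m-2) \<or> N (m-2) \<subseteq> N (m+1)" using cp[where N=N and n=n and i="m+1" and j="m-2", OF C] m by simp
  have c4: "\<not> N (m+1) \<subseteq> N m" using nc'(2)[where N=N and n=n and k=m, OF C] m by simp
  have d2: "N (m-2) \<subseteq> N (m+1)" using c3 c4 a by auto
  have e: "N (m-1) \<subseteq> N (m+1) \<or> N (m+1) \<subseteq> N (m-1)" using cp[where N=N and n=n and i="m-1" and j="m+1", OF C] m by simp
  have f1: "\<not> N (m+2) \<subseteq> N (m+1)" using nc'(2)[where N=N and n=n and k="m+1", OF C] m by simp
  have f2: "\<not> N (m-2) \<subseteq> N (m-1)" using nc'(1)[where N=N and n=n and k="m-2", OF C] m by (simp add: Suc_diff_Suc numeral_2_eq_2)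
  show False using e d1 d2 f1 f2 by auto
qed

lemma step2:
  fixes N :: "nat \<Rightarrow> 'b set"
  assumes C: "\<And>i j. i\<in>{1..n} \<Longrightarrow> j\<in>{1..n} \<Longrightarrow> (N i \<subseteq> N j \<or> N j \<subseteq> N i) \<longleftrightarrow> \<not>(j = i+1 \<or> i = j+1)"
    and fin: "\<And>i. finite (N i)"
    and mx: "\<forall>i\<in>{1..n}. card (N i) \<le> card (N 1)"
  shows "1 \<le> i \<Longrightarrow> i + 2 \<le> j \<Longrightarrow> j \<le> n \<Longrightarrow> N j \<subseteq> N i"
proof (induction i arbitrary: j rule: less_induct)
  case (less i)
  have base: "N (i+2) \<subseteq> N i"
  proof (cases "i = 1")
    case True then show ?thesis using cmp_le[where N=N and n=n and i=1 and j=3, OF C fin] mx less.prems by (auto simp: numeral_3_eq_3)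
  next
    case False
    have "N (i+2) \<subseteq> N (i-1)" using less.IH[of "i-1" "i+2"] False less.prems by auto
    moreover have "\<not> N i \<subseteq> N (i-1)" using nc'(2)[where N=N and n=n and k="i-1", OF C] False less.prems by simp
    moreover have "N i \<subseteq> N (i+2) \<or> N (i+2) \<subseteq> N i" using cp[where N=N and n=n and i=i and j="i+2", OF C] less.prems by simp
    ultimately show ?thesis by auto
  qed
  show ?case by (rule fwd[where N=N and n=n and i=i and j="i+2" and k=j, OF C]) (use base less.prems in simp_all)
qed

lemma key:
  fixes N :: "nat \<Rightarrow> 'b set" and n :: nat
  assumes fin: "\<And>i. finite (N i)" and n2: "n \<ge> 2"
    and C: "\<And>i j. i\<in>{1..n} \<Longrightarrow> j\<in>{1..n} \<Longrightarrow> (N i \<subseteq> N j \<or> N j \<subseteq> N i) \<longleftrightarrow> \<not>(j = i+1 \<or> i = j+1)"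
  shows "Max ((\<lambda>i. card (N i)) ` {1..n}) \<in> {card (N 1), card (N 2), card (N (n - 1)), card (N n)}
     \<and> (Max ((\<lambda>i. card (N i)) ` {1..n}) = card (N 1) \<longrightarrow>
          (\<forall>i j. 1 \<le> i \<and> i + 2 \<le> j \<and> j \<le> n \<longrightarrow>
               card (N i) \<ge> card (N j) \<and> N j \<subseteq> N i)
        \<and> (\<forall>i. 1 \<le> i \<and> i \<le> n \<longrightarrow> (\<Union>j\<in>{i+2..n}. N j) \<subseteq> N i)
        \<and> (\<Union>i\<in>{1..n}. N i) = N 1 \<union> N 2
        \<and> (\<forall>k\<ge>1. 2*k + 2 \<le> n \<longrightarrow> card (N (2*k)) \<ge> card (N (2*k + 2)))
        \<and> (\<forall>k\<ge>1. 2*k + 1 \<le> n \<longrightarrow> card (N (2*k - 1)) \<ge> card (N (2*k + 1)))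
        \<and> Min ((\<lambda>i. card (N i)) ` {1..n}) \<in> {card (N (n - 1)), card (N n)})"
proof -
  let ?D = "(\<lambda>i. card (N i)) ` {1..n}"
  have fD: "finite ?D" and neD: "?D \<noteq> {}" using n2 by auto
  obtain m where m: "m \<in> {1..n}" "Max ?D = card (N m)" using Max_in[OF fD neD] by auto
  have mx: "\<forall>i\<in>{1..n}. card (N i) \<le> card (N m)" using Max_ge[OF fD] m by (metis imageI)
  have P1: "Max ?D \<in> {card (N 1), card (N 2), card (N (n - 1)), card (N n)}"
  proof (cases "3 \<le> m \<and> m + 2 \<le> n")
    case True then show ?thesis using nomax[where N=N and n=n and m=m, OF C fin] mx by blast
  next
    case False
    then have "m = 1 \<or> m = 2 \<or> m = n - 1 \<or> m = n" using m by auto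
    then show ?thesis using m by auto
  qed
  have P2: "Max ?D = card (N 1) \<Longrightarrow> ?thesis"
  proof -
    assume h: "Max ?D = card (N 1)"
    have mx1: "\<forall>i\<in>{1..n}. card (N i) \<le> card (N 1)" using mx m h by auto
    have S: "\<And>i j. 1 \<le> i \<Longrightarrow> i + 2 \<le> j \<Longrightarrow> j \<le> n \<Longrightarrow> N j \<subseteq> N i"
      by (rule step2[where N=N and n=n, OF C fin mx1])
    have Sc: "card (N j) \<le> card (N i)" if "1 \<le> i" "i + 2 \<le> j" "j \<le> n" for i j
      using card_mono[OF fin S[OF that]] .
    have U: "(\<Union>i\<in>{1..n}. N i) = N 1 \<union> N 2"
    proof
      show "(\<Union>i\<in>{1..n}. N i) \<subseteq> N 1 \<union> N 2"
      proof
        fix x assume "x \<in> (\<Union>i\<in>{1..n}. N i)"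
        then obtain i where "i \<in> {1..n}" "x \<in> N i" by auto
        then show "x \<in> N 1 \<union> N 2" using S[of 1 i]
          by (cases "i = 1 \<or> i = 2") auto
      qed
      show "N 1 \<union> N 2 \<subseteq> (\<Union>i\<in>{1..n}. N i)"
      proof -
        have "1 \<in> {1..n}" "2 \<in> {1..n}" using n2 by auto
        then show ?thesis by blast
      qed
    qed
    have Mn: "Min ?D \<in> {card (N (n - 1)), card (N n)}"
    proof -
      obtain q where q: "q \<in> {1..n}" "Min ?D = card (N q)" using Min_in[OF fD neD] by auto
      have le: "Min ?D \<le> card (N n)" using Min_le[OF fD] n2 by auto
      show ?thesis
      proof (cases "q + 2 \<le> n")
        case True then have "card (N n) \<le> card (N q)" using Sc q by auto
        then show ?thesis using le q by auto
      next
        case False then have "q = n - 1 \<or> q = n" using q by auto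
        then show ?thesis using q by auto
      qed
    qed
    have E1: "\<forall>k\<ge>1. 2*k + 2 \<le> n \<longrightarrow> card (N (2*k)) \<ge> card (N (2*k + 2))"
      using Sc by auto
    have E2: "\<forall>k\<ge>1. 2*k + 1 \<le> n \<longrightarrow> card (N (2*k - 1)) \<ge> card (N (2*k + 1))"
    proof (intro allI impI)
      fix k :: nat assume "k \<ge> 1" "2*k+1 \<le> n"
      then show "card (N (2*k - 1)) \<ge> card (N (2*k + 1))" using Sc[of "2*k-1" "2*k+1"] by auto
    qed
    have UU: "\<forall>i. 1 \<le> i \<and> i \<le> n \<longrightarrow> (\<Union>j\<in>{i+2..n}. N j) \<subseteq> N i" proof (intro allI impI UN_least)
      fix i j assume "1 \<le> i \<and> i \<le> n" "j \<in> {i+2..n}"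
      then show "N j \<subseteq> N i" using S[of i j] by simp
    qed
    have SS: "\<forall>i j. 1 \<le> i \<and> i + 2 \<le> j \<and> j \<le> n \<longrightarrow> card (N i) \<ge> card (N j) \<and> N j \<subseteq> N i"
      using S Sc by simp
    show ?thesis by (intro conjI impI P1 SS UU U E1 E2 Mn)
  qed
  show ?thesis
  proof (cases "Max ?D = card (N 1)")
    case True then show ?thesis by (rule P2)
  next
    case False then show ?thesis using P1 by (intro conjI impI) simp_all
  qed
qed

theorem theorem2p4:
  fixes V K I :: "'a set" and E :: "'a \<Rightarrow> 'a \<Rightarrow> bool" and v :: "nat \<Rightarrow> 'a" and n :: nat
  assumes "split_graph V E K I"
    and "n \<ge> 2"
    and "induced_path_phi E I v n"
  shows "Max ((\<lambda>i. deg E (v i)) ` {1..n}) \<in> {deg E (v 1), deg E (v 2), deg E (v (n - 1)), deg E (v n)}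
     \<and> (Max ((\<lambda>i. deg E (v i)) ` {1..n}) = deg E (v 1) \<longrightarrow>
          (\<forall>i j. 1 \<le> i \<and> i + 2 \<le> j \<and> j \<le> n \<longrightarrow>
               deg E (v i) \<ge> deg E (v j) \<and> nbhd E (v j) \<subseteq> nbhd E (v i))
        \<and> (\<forall>i. 1 \<le> i \<and> i \<le> n \<longrightarrow> (\<Union>j\<in>{i+2..n}. nbhd E (v j)) \<subseteq> nbhd E (v i))
        \<and> (\<Union>i\<in>{1..n}. nbhd E (v i)) = nbhd E (v 1) \<union> nbhd E (v 2)
        \<and> (\<forall>k\<ge>1. 2*k + 2 \<le> n \<longrightarrow> deg E (v (2*k)) \<ge> deg E (v (2*k + 2)))
        \<and> (\<forall>k\<ge>1. 2*k + 1 \<le> n \<longrightarrow> deg E (v (2*k - 1)) \<ge> deg E (v (2*k + 1)))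
        \<and> Min ((\<lambda>i. deg E (v i)) ` {1..n}) \<in> {deg E (v (n - 1)), deg E (v n)})"
proof -
  let ?N = "\<lambda>i. nbhd E (v i)"
  have fin: "\<And>i. finite (?N i)"
  proof -
    fix i
    have "?N i \<subseteq> V" using assms(1) unfolding split_graph_def nbhd_def by auto
    then show "finite (?N i)" using assms(1) unfolding split_graph_def by (meson finite_subset)
  qed
  have sig: "\<And>u w. finite (nbhd E u) \<Longrightarrow> finite (nbhd E w) \<Longrightarrow>
      (sigma E u w > 0) \<longleftrightarrow> \<not> nbhd E u \<subseteq> nbhd E w \<and> \<not> nbhd E w \<subseteq> nbhd E u"
  proof -
    fix u w assume fu: "finite (nbhd E u)" and fw: "finite (nbhd E w)"
    have a: "(deg E u - eta E u w > 0) \<longleftrightarrow> \<not> nbhd E u \<subseteq> nbhd E w"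
    proof -
      have "eta E u w \<le> deg E u" unfolding eta_def deg_def using fu by (simp add: card_mono)
      moreover have "eta E u w = deg E u \<longleftrightarrow> nbhd E u \<subseteq> nbhd E w"
        unfolding eta_def deg_def using fu
        by (metis Int_lower1 card_subset_eq inf.absorb_iff1)
      ultimately show ?thesis by auto
    qed
    have b: "(deg E w - eta E u w > 0) \<longleftrightarrow> \<not> nbhd E w \<subseteq> nbhd E u"
    proof -
      have "eta E u w \<le> deg E w" unfolding eta_def deg_def using fw by (simp add: card_mono)
      moreover have "eta E u w = deg E w \<longleftrightarrow> nbhd E w \<subseteq> nbhd E u"
        unfolding eta_def deg_def using fw
        by (metis Int_lower2 card_subset_eq inf.absorb_iff2)
      ultimately show ?thesis by auto
    qed
    show "(sigma E u w > 0) \<longleftrightarrow> \<not> nbhd E u \<subseteq> nbhd E w \<and> \<not> nbhd E w \<subseteq> nbhd E u"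
      unfolding sigma_def using a b by simp
  qed
  have C: "\<And>i j. i\<in>{1..n} \<Longrightarrow> j\<in>{1..n} \<Longrightarrow> (?N i \<subseteq> ?N j \<or> ?N j \<subseteq> ?N i) \<longleftrightarrow> \<not>(j = i+1 \<or> i = j+1)"
  proof -
    fix i j assume ij: "i\<in>{1..n}" "j\<in>{1..n}"
    have p: "phi_adj E I (v i) (v j) \<longleftrightarrow> (j = i + 1 \<or> i = j + 1)"
      using assms(3) ij unfolding induced_path_phi_def by blast
    show "(?N i \<subseteq> ?N j \<or> ?N j \<subseteq> ?N i) \<longleftrightarrow> \<not>(j = i+1 \<or> i = j+1)"
    proof (cases "i = j")
      case True then show ?thesis by auto
    next
      case False
      then have "v i \<noteq> v j" using assms(3) ij unfolding induced_path_phi_def inj_on_def by blast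
      moreover have "v i \<in> I" "v j \<in> I" using assms(3) ij unfolding induced_path_phi_def by auto
      ultimately show ?thesis using p sig[OF fin fin] unfolding phi_adj_def by blast
    qed
  qed
  note K = key[where N="\<lambda>i. nbhd E (v i)" and n=n, OF fin assms(2) C]
  show ?thesis unfolding deg_def by (rule K)
qed

end
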